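(* Let $R$ be a commutative ring, $\mathcal{A}=\{L_1,\dots,L_n\}$ an arrangement of affine lines in $\mathbb{C}^2$ with parallel class decomposition $\mathcal{A}_1\sqcup\dots\sqcup\mathcal{A}_s$, and $\Delta_{tot}:A^*_R(\mathcal{A})\to A^*_R(\mathcal{C}_s)$ the $R$-algebra homomorphism with $e_i\mapsto\tilde e_\alpha$ for $L_i\in\mathcal{A}_\alpha$. Let $\xi=\sum_{i=1}^n a_ie_i\in A^1_R(\mathcal{A})$ and $\eta\in A^1_R(\mathcal{A})_0$. If $\sum_{i=1}^n a_i\in R^\times$ and $\xi\wedge\eta=0$, then $\Delta_{tot}(\eta)=0$.
   Context: The parallel class decomposition partitions $\mathcal{A}$ so that two lines are parallel iff they lie in the same class. $\mathcal{C}_s$ is an arrangement of $s$ distinct lines through the origin in $\mathbb{C}^2$ with Orlik–Solomon generators $\tilde e_1,\dots,\tilde e_s$. The Orlik–Solomon algebra $A^*_R(\mathcal{A})$ of an arrangement $\mathcal{A}=\{L_1,\dots,L_n\}$ of affine lines in $\mathbb{C}^2$ over a commutative ring $R$ is the graded $R$-algebra with $A^0_R=R$, $A^1_R=\bigoplus_{i=1}^n R e_i$, $A^2_R=\bigwedge^2 A^1_R/I$ where $I$ is the $R$-submodule generated by (i) $e_i\wedge e_j$ for each pair of parallel lines $L_i\parallel L_j$ and (ii) $e_i\wedge e_j-e_i\wedge e_k+e_j\wedge e_k$ for each triple of lines with $L_i\cap L_j\cap L_k\neq\emptyset$, and $A^q_R=0$ for $q\ge3$. $A^1_R(\mathcal{A})_0=\{c_1e_1+\dots+c_ne_n\mid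 c_1+\dots+c_n=0\}$. *)

theory Defs
  imports Complex_Main
begin

type_synonym point = "complex \<times> complex"

definition affine_line :: "point set \<Rightarrow> bool" where
  "affine_line S \<longleftrightarrow> (\<exists>p1 p2 v1 v2. (v1, v2) \<noteq> (0, 0) \<and>
      S = {(p1 + t * v1, p2 + t * v2) | t. True})"

definition parallel :: "point set \<Rightarrow> point set \<Rightarrow> bool" where
  "parallel S T \<longleftrightarrow> (\<exists>c1 c2. T = (\<lambda>(x, y). (x + c1, y + c2)) ` S)"

definition line_arrangement :: "nat \<Rightarrow> (nat \<Rightarrow> point set) \<Rightarrow> bool" where
  "line_arrangement n L \<longleftrightarrow> (\<forall>i<n. affine_line (L i)) \<and> inj_on L {..<n}"

text \<open>Elements of A^1 are coefficient vectors c (c i = coefficient of e_i, i < n).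
  Elements of the exterior square of A^1 are represented as alternating
  matrices w k l (coefficient structure of sum over k,l of w k l e_k e_l / 2),
  i.e. e_i wedge e_j is the matrix below.\<close>
definition ewedge :: "nat \<Rightarrow> nat \<Rightarrow> nat \<Rightarrow> nat \<Rightarrow> 'r::comm_ring_1" where
  "ewedge i j = (\<lambda>k l. (if k = i \<and> l = j then 1 else 0) - (if k = j \<and> l = i then 1 else 0))"

definition wedge1 :: "nat \<Rightarrow> (nat \<Rightarrow> 'r::comm_ring_1) \<Rightarrow> (nat \<Rightarrow> 'r) \<Rightarrow> nat \<Rightarrow> nat \<Rightarrow> 'r" where
  "wedge1 n x y = (\<lambda>k l. if k < n \<and> l < n then x k * y l - x l * y k else 0)"

definition OS_gens :: "nat \<Rightarrow> (nat \<Rightarrow> point set) \<Rightarrow> (nat \<Rightarrow> nat \<Rightarrow> 'r::comm_ring_1) set" where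
  "OS_gens n L =
     {ewedge i j | i j. i < n \<and> j < n \<and> i \<noteq> j \<and> parallel (L i) (L j)}
   \<union> {(\<lambda>k l. ewedge i j k l - ewedge i m k l + ewedge j m k l) | i j m.
        i < n \<and> j < n \<and> m < n \<and> i \<noteq> j \<and> i \<noteq> m \<and> j \<noteq> m \<and>
        L i \<inter> L j \<inter> L m \<noteq> {}}"

definition OS_ideal :: "nat \<Rightarrow> (nat \<Rightarrow> point set) \<Rightarrow> (nat \<Rightarrow> nat \<Rightarrow> 'r::comm_ring_1) set" where
  "OS_ideal n L = {w. \<exists>G c. finite G \<and> G \<subseteq> OS_gens n L \<and>
       w = (\<lambda>k l. \<Sum>g\<in>G. c g * g k l)}"

definition OS_wedge_zero :: "nat \<Rightarrow> (nat \<Rightarrow> point set) \<Rightarrow> (nat \<Rightarrow> 'r::comm_ring_1) \<Rightarrow> (nat \<Rightarrow> 'r) \<Rightarrow> bool" where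
  "OS_wedge_zero n L x y \<longleftrightarrow> wedge1 n x y \<in> OS_ideal n L"

definition parallel_classes :: "nat \<Rightarrow> (nat \<Rightarrow> point set) \<Rightarrow> nat set set" where
  "parallel_classes n L = {..<n} // {(i, j). i < n \<and> j < n \<and> parallel (L i) (L j)}"

text \<open>Delta_tot on degree one: the generators of A^1(C_s) are indexed by the parallel
  classes; Delta_tot(sum b_i e_i) = sum over classes C of (sum_{i in C} b_i) e~_C.\<close>
definition Delta_tot1 :: "nat \<Rightarrow> (nat \<Rightarrow> point set) \<Rightarrow> (nat \<Rightarrow> 'r::comm_ring_1) \<Rightarrow> nat set \<Rightarrow> 'r" where
  "Delta_tot1 n L y = (\<lambda>C. if C \<in> parallel_classes n L then \<Sum>i\<in>C. y i else 0)"

end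

theory Submission
  imports Defs
begin
lemma phi_ewedge:
  fixes g :: "nat \<Rightarrow> 'r::comm_ring_1"
  assumes "i<n" "j<n"
  shows "(\<Sum>k<n. \<Sum>l<n. ewedge i j k l * g l) = g j - g i"
proof -
  have e: "\<And>k l. ewedge i j k l * g l = (if l = j then (if k = i then g j else 0) else 0) - (if l = i then (if k = j then g i else 0) else 0)"
    by (simp add: ewedge_def left_diff_distrib)
  have "\<And>k. (\<Sum>l<n. ewedge i j k l * g l) = (if k = i then g j else 0) - (if k = j then g i else 0)"
    unfolding e sum_subtractf using assms by simp
  then show ?thesis using assms by (simp add: sum_subtractf)
qed

lemma phi_lin:
  fixes g :: "nat \<Rightarrow> 'r::comm_ring_1"
  shows "(\<Sum>k<n. \<Sum>l<n. (\<Sum>x\<in>G. c x * x k l) * g l) = (\<Sum>x\<in>G. c x * (\<Sum>k<n. \<Sum>l<n. x k l * g l))"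
proof -
  have "(\<Sum>x\<in>G. c x * (\<Sum>k<n. \<Sum>l<n. x k l * g l)) = (\<Sum>x\<in>G. \<Sum>k<n. \<Sum>l<n. c x * x k l * g l)"
    by (simp add: sum_distrib_left mult.assoc)
  also have "\<dots> = (\<Sum>k<n. \<Sum>x\<in>G. \<Sum>l<n. c x * x k l * g l)" by (rule sum.swap)
  also have "\<dots> = (\<Sum>k<n. \<Sum>l<n. \<Sum>x\<in>G. c x * x k l * g l)" by (rule sum.cong[OF refl], rule sum.swap)
  also have "\<dots> = (\<Sum>k<n. \<Sum>l<n. (\<Sum>x\<in>G. c x * x k l) * g l)" by (simp add: sum_distrib_right)
  finally show ?thesis by simp
qed

lemma phi_wedge:
  fixes g :: "nat \<Rightarrow> 'r::comm_ring_1"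
  shows "(\<Sum>k<n. \<Sum>l<n. wedge1 n a b k l * g l) = (\<Sum>k<n. a k) * (\<Sum>l<n. b l * g l) - (\<Sum>l<n. a l * g l) * (\<Sum>k<n. b k)"
proof -
  have "(\<Sum>k<n. \<Sum>l<n. wedge1 n a b k l * g l) = (\<Sum>k<n. \<Sum>l<n. a k * (b l * g l)) - (\<Sum>k<n. \<Sum>l<n. (a l * g l) * b k)"
  proof -
    have "(\<Sum>k<n. \<Sum>l<n. wedge1 n a b k l * g l) = (\<Sum>k<n. \<Sum>l<n. a k * (b l * g l) - (a l * g l) * b k)"
      by (intro sum.cong refl) (simp add: wedge1_def algebra_simps)
    then show ?thesis by (simp add: sum_subtractf)
  qed
  also have "\<dots> = (\<Sum>k<n. a k) * (\<Sum>l<n. b l * g l) - (\<Sum>k<n. \<Sum>l<n. (a l * g l) * b k)"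
    by (simp add: sum_product)
  also have "(\<Sum>k<n. \<Sum>l<n. (a l * g l) * b k) = (\<Sum>l<n. \<Sum>k<n. (a l * g l) * b k)" by (rule sum.swap)
  also have "\<dots> = (\<Sum>l<n. a l * g l) * (\<Sum>k<n. b k)" by (simp add: sum_product)
  finally show ?thesis .
qed

lemma par_sym: "parallel S T \<Longrightarrow> parallel T S"
  unfolding parallel_def
proof clarify
  fix c1 c2
  show "\<exists>d1 d2. S = (\<lambda>(x, y). (x + d1, y + d2)) ` (\<lambda>(x, y). (x + c1, y + c2)) ` S"
    by (rule exI[of _ "-c1"], rule exI[of _ "-c2"]) (simp add: image_image case_prod_beta)
qed
lemma par_trans: "parallel S T \<Longrightarrow> parallel T U \<Longrightarrow> parallel S U"
  unfolding parallel_def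
proof clarify
  fix c1 c2 d1 d2
  show "\<exists>e1 e2. (\<lambda>(x, y). (x + d1, y + d2)) ` (\<lambda>(x, y). (x + c1, y + c2)) ` S = (\<lambda>(x, y). (x + e1, y + e2)) ` S"
    by (rule exI[of _ "c1+d1"], rule exI[of _ "c2+d2"]) (simp add: image_image case_prod_beta add.assoc)
qed

theorem lemma3p2:
  fixes n :: nat and L :: "nat \<Rightarrow> point set" and a b :: "nat \<Rightarrow> 'r::comm_ring_1"
  assumes "line_arrangement n L"
    and "(\<Sum>i<n. b i) = 0"
    and "(\<Sum>i<n. a i) dvd 1"
    and "OS_wedge_zero n L a b"
  shows "Delta_tot1 n L b = (\<lambda>C. 0)"
proof
  fix C
  show "Delta_tot1 n L b C = 0"
  proof (cases "C \<in> parallel_classes n L")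
    case False
    then show ?thesis by (simp add: Delta_tot1_def)
  next
    case True
    then obtain x where x: "x \<in> {..<n}" and Cx: "C = {(i, j). i < n \<and> j < n \<and> parallel (L i) (L j)} `` {x}"
      unfolding parallel_classes_def by (rule quotientE)
    have Cdef: "C = {j. j < n \<and> parallel (L x) (L j)}" using x Cx by auto
    have Csub: "C \<subseteq> {..<n}" using Cdef by auto
    define g :: "nat \<Rightarrow> 'r" where "g l = (if l \<in> C then 1 else 0)" for l
    have memb: "i \<in> C \<longleftrightarrow> j \<in> C" if "i < n" "j < n" "parallel (L i) (L j)" for i j
      using that par_sym par_trans unfolding Cdef by blast
    define \<phi> where "\<phi> w = (\<Sum>k<n. \<Sum>l<n. w k l * g l)" for w :: "nat \<Rightarrow> nat \<Rightarrow> 'r"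
    have gen0: "\<phi> w = 0" if "w \<in> OS_gens n L" for w
      using that
    proof (unfold OS_gens_def, elim UnE CollectE exE conjE)
      fix i j assume "w = ewedge i j" "i < n" "j < n" "parallel (L i) (L j)"
      then show "\<phi> w = 0" using memb[of i j] by (simp add: \<phi>_def phi_ewedge g_def)
    next
      fix i j m assume w: "w = (\<lambda>k l. ewedge i j k l - ewedge i m k l + ewedge j m k l)"
        and "i < n" "j < n" "m < n"
      have "\<phi> w = \<phi> (ewedge i j) - \<phi> (ewedge i m) + \<phi> (ewedge j m)"
        unfolding w \<phi>_def by (simp add: algebra_simps sum.distrib sum_subtractf)
      then show "\<phi> w = 0" using \<open>i < n\<close> \<open>j < n\<close> \<open>m < n\<close> by (simp add: \<phi>_def phi_ewedge)
    qed
    from assms(4) obtain G c where G: "finite G" "G \<subseteq> OS_gens n L"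
      and w: "wedge1 n a b = (\<lambda>k l. \<Sum>g\<in>G. c g * g k l)"
      unfolding OS_wedge_zero_def OS_ideal_def by blast
    have "\<phi> (wedge1 n a b) = (\<Sum>x\<in>G. c x * \<phi> x)"
      unfolding w \<phi>_def by (rule phi_lin)
    also have "\<dots> = 0" using G gen0 by (intro sum.neutral) auto
    finally have z: "\<phi> (wedge1 n a b) = 0" .
    have sC: "(\<Sum>l<n. b l * g l) = (\<Sum>i\<in>C. b i)"
    proof -
      have "(\<Sum>l<n. b l * g l) = (\<Sum>l\<in>{..<n}. if l \<in> C then b l else 0)"
        by (intro sum.cong refl) (simp add: g_def)
      also have "\<dots> = (\<Sum>i\<in>{..<n} \<inter> C. b i)" by (simp add: sum.inter_restrict)
      also have "{..<n} \<inter> C = C" using Csub by auto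
      finally show ?thesis .
    qed
    have "(\<Sum>k<n. a k) * (\<Sum>i\<in>C. b i) = 0"
      using z assms(2) unfolding \<phi>_def phi_wedge sC by simp
    moreover obtain u where "1 = (\<Sum>k<n. a k) * u" using assms(3) by (elim dvdE)
    ultimately have "(\<Sum>i\<in>C. b i) = 0"
      by (metis mult.commute mult.left_commute mult_1 mult_zero_right)
    then show ?thesis using True by (simp add: Delta_tot1_def)
  qed
qed
end
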